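(* The log-linear model $\mathcal{L}(\widetilde\Phi_k\times\Psi:\ 1\le k\le n-1)$ of strictly positive $L_S$-decomposable distributions on $S_n$ has number of free parameters \[ c_n=\sum_{i=1}^n\left[\binom{n}{i}-1\right]=2^n-n-1. \]
   Context: $S_n$ is the group of permutations of $\{1,\ldots,n\}$. Product partition of the $n\times n$ board: $\mathcal{B}=\mathcal{R}\times\mathcal{C}=(R_i\times C_j)$ for partitions $\mathcal{R},\mathcal{C}$ of $\{1,\ldots,n\}$, with marginal $|\pi_{\mathcal{B}}|=(t_{ij})$, $t_{ij}=|\{s:(s,\pi(s))\in R_i\times C_j\}|$; $U^{\mathcal{B}}=\{v\in\mathbb{R}^{S_n}: |\pi_{\mathcal{B}}|=|\sigma_{\mathcal{B}}|\Rightarrow v(\pi)=v(\sigma)\}$. $\mathcal{L}(\mathcal{B}_1,\ldots,\mathcal{B}_m)$ is the set of strictly positive distributions $p$ on $S_n$ with $\log p\in U:=\mathrm{Span}(U^{\mathcal{B}_1},\ldots,U^{\mathcal{B}_m})$; its number of free parameters is $\dim U-1$. Thin sections $\widetilde\Phi_k=(\{1,\ldots,k\},\{k+1,\ldots,n\})$; full partition $\Psi=(\{1\},\ldots,\{n\})$. *)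

theory Defs
  imports "HOL-Analysis.Analysis" "HOL-Library.Function_Algebras"
begin

text \<open>Permutations of {1..n} are functions nat => nat with p permutes {1..n};
  real vectors indexed by S_n are functions (nat => nat) => real vanishing outside S_n.\<close>

definition Sn :: "nat \<Rightarrow> (nat \<Rightarrow> nat) set" where
  "Sn n = {p. p permutes {1..n}}"

definition marginal :: "(nat \<Rightarrow> nat) \<Rightarrow> nat set \<Rightarrow> nat set \<Rightarrow> nat" where
  "marginal p A B = card {s. s \<in> A \<and> p s \<in> B}"

text \<open>U^B for the product partition B = R x C (R, C partitions of {1..n} given as sets of blocks).\<close>
definition UB :: "nat \<Rightarrow> nat set set \<Rightarrow> nat set set \<Rightarrow> ((nat \<Rightarrow> nat) \<Rightarrow> real) set" where
  "UB n R C = {v. (\<forall>p\<in>Sn n. \<forall>q\<in>Sn n.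
                    (\<forall>A\<in>R. \<forall>B\<in>C. marginal p A B = marginal q A B) \<longrightarrow> v p = v q)
               \<and> (\<forall>p. p \<notin> Sn n \<longrightarrow> v p = 0)}"

definition thin_section :: "nat \<Rightarrow> nat \<Rightarrow> nat set set" where
  "thin_section n k = {{1..k}, {k+1..n}}"

definition full_partition :: "nat \<Rightarrow> nat set set" where
  "full_partition n = {{i} | i. i \<in> {1..n}}"

abbreviation rscale :: "real \<Rightarrow> ((nat \<Rightarrow> nat) \<Rightarrow> real) \<Rightarrow> ((nat \<Rightarrow> nat) \<Rightarrow> real)" where
  "rscale c v \<equiv> (\<lambda>p. c * v p)"

definition log_linear_space :: "nat \<Rightarrow> (nat set set \<times> nat set set) set \<Rightarrow> ((nat \<Rightarrow> nat) \<Rightarrow> real) set" where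
  "log_linear_space n Bs = module.span rscale (\<Union>(R,C)\<in>Bs. UB n R C)"

definition num_free_params :: "nat \<Rightarrow> (nat set set \<times> nat set set) set \<Rightarrow> nat" where
  "num_free_params n Bs = vector_space.dim rscale (log_linear_space n Bs) - 1"

end

theory Submission
  imports Defs "HOL-Combinatorics.Permutations"
begin

interpretation V: vector_space rscale
  by unfold_locales (auto simp: fun_eq_iff algebra_simps)

lemma sum_apply_fun: "(\<Sum>x\<in>A. g x) p = (\<Sum>x\<in>A. g x p)"
  by (induction A rule: infinite_finite_induct) auto

definition FF :: "nat \<Rightarrow> nat set \<Rightarrow> (nat \<Rightarrow> nat) \<Rightarrow> real" where
  "FF n S = (\<lambda>p. if p \<in> Sn n \<and> p ` {1..card S} = S then 1 else 0)"

definition II :: "nat \<Rightarrow> nat set set" where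
  "II n = {S. S \<subseteq> {1..n} \<and> S \<noteq> {} \<and> S \<noteq> {1..n}}"

definition JJ :: "nat \<Rightarrow> nat set set" where
  "JJ n = II n - {{1..k} | k. k \<in> {2..n-1}}"

lemma Sn_inj: "p \<in> Sn n \<Longrightarrow> inj p"
  unfolding Sn_def using permutes_inj by blast

lemma Sn_img: "p \<in> Sn n \<Longrightarrow> k \<le> n \<Longrightarrow> p ` {1..k} \<subseteq> {1..n}"
  unfolding Sn_def using permutes_image[of p "{1..n}"] by auto

lemma Sn_card: "p \<in> Sn n \<Longrightarrow> card (p ` {1..k}) = k"
proof -
  assume p: "p \<in> Sn n"
  have "inj_on p {1..k}" using Sn_inj[OF p] by (meson inj_on_subset subset_UNIV)
  then show ?thesis by (simp add: card_image)
qed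

lemma II_card: assumes "S \<in> II n" shows "card S \<in> {1..n-1}" "finite S"
proof -
  have s: "S \<subseteq> {1..n}" "S \<noteq> {}" "S \<noteq> {1..n}" using assms by (auto simp: II_def)
  then show f: "finite S" using finite_subset by blast
  have "card S < n" using s psubset_card_mono[of "{1..n}" S] by auto
  moreover have "card S \<ge> 1" using s f by (simp add: Suc_leI card_gt_0_iff)
  ultimately show "card S \<in> {1..n-1}" by auto
qed

lemma prefix_II: "p \<in> Sn n \<Longrightarrow> k \<in> {1..n-1} \<Longrightarrow> p ` {1..k} \<in> II n"
proof -
  assume p: "p \<in> Sn n" and k: "k \<in> {1..n-1}"
  have "k \<le> n" using k by auto
  then have "p ` {1..k} \<subseteq> {1..n}" using Sn_img[OF p] by blast
  moreover have "card (p ` {1..k}) = k" using Sn_card[OF p] .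
  ultimately show ?thesis using k unfolding II_def by auto
qed

lemma FF_eq: "p \<in> Sn n \<Longrightarrow> card T = k \<Longrightarrow> FF n T p = (if T = p ` {1..k} then 1 else 0)"
  unfolding FF_def by auto

lemma key_sum:
  assumes p: "p \<in> Sn n"
  shows "(\<Sum>S\<in>II n. d S * FF n S p) = (\<Sum>k=1..n-1. d (p ` {1..k}))"
proof -
  let ?g = "\<lambda>k. p ` {1..k}"
  have inj: "inj_on ?g {1..n-1}"
    by (rule inj_onI) (metis Sn_card[OF p])
  have sub: "?g ` {1..n-1} \<subseteq> II n" using prefix_II[OF p] by auto
  have fin: "finite (II n)" unfolding II_def by (rule finite_subset[of _ "Pow {1..n}"]) auto
  have "(\<Sum>S\<in>II n. d S * FF n S p) = (\<Sum>S\<in>?g ` {1..n-1}. d S * FF n S p)"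
  proof (rule sum.mono_neutral_right[OF fin sub])
    show "\<forall>S\<in>II n - ?g ` {1..n-1}. d S * FF n S p = 0"
    proof
      fix S assume S: "S \<in> II n - ?g ` {1..n-1}"
      have "card S \<in> {1..n-1}" using S II_card by auto
      then have "S \<noteq> p ` {1..card S}" using S by auto
      then show "d S * FF n S p = 0" using FF_eq[OF p, of S "card S"] by simp
    qed
  qed
  also have "\<dots> = (\<Sum>k=1..n-1. d (?g k) * FF n (?g k) p)"
    by (rule sum.reindex[OF inj, unfolded comp_def])
  also have "\<dots> = (\<Sum>k=1..n-1. d (?g k))"
    using FF_eq[OF p] Sn_card[OF p] by simp
  finally show ?thesis .
qed


lemma list_perm:
  assumes d: "distinct xs" and s: "set xs = {1..n}"
  shows "\<exists>p\<in>Sn n. \<forall>j\<le>n. p ` {1..j} = set (take j xs)"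
proof -
  have len: "length xs = n" using distinct_card[OF d] s by simp
  define p where "p = (\<lambda>i. if i \<in> {1..n} then xs!(i-1) else i)"
  have img: "p ` {1..j} = set (take j xs)" if j: "j \<le> n" for j
  proof -
    have "{1..j} = Suc ` {0..<j}" by (auto simp: image_iff)
    then have "p ` {1..j} = (\<lambda>i. p (Suc i)) ` {0..<j}" by (metis image_image)
    also have "\<dots> = nth xs ` {0..<j}" using j unfolding p_def by (intro image_cong) auto
    also have "\<dots> = set (take j xs)" using j len by (simp add: nth_image)
    finally show ?thesis .
  qed
  have im: "p ` {1..n} = {1..n}" using img[of n] len s by simp
  have "card (p ` {1..n}) = card {1..n}" by (subst im) (rule refl)
  then have "inj_on p {1..n}" by (intro eq_card_imp_inj_on) auto
  then have "bij_betw p {1..n} {1..n}" using im by (simp add: bij_betw_def)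
  then have "p permutes {1..n}" by (rule bij_imp_permutes) (auto simp: p_def)
  then show ?thesis using img unfolding Sn_def by auto
qed

lemma exchange:
  assumes Z: "\<forall>p\<in>Sn n. (\<Sum>k=1..n-1. d (p ` {1..k})) = (0::real)"
    and S: "S \<subseteq> {1..n}" "card S = k" "k \<in> {1..n-1}" "a \<in> S" "b \<in> {1..n}" "b \<notin> S"
  shows "d S = d (insert b (S - {a}))"
proof -
  have finS: "finite S" using S(1) finite_subset by blast
  define L1 where "L1 = sorted_list_of_set (S - {a})"
  define L2 where "L2 = sorted_list_of_set ({1..n} - insert b S)"
  have sL1: "set L1 = S - {a}" "distinct L1" using finS by (auto simp: L1_def)
  have sL2: "set L2 = {1..n} - insert b S" "distinct L2" by (auto simp: L2_def)
  have lL1: "length L1 = k - 1" using sL1 distinct_card[OF sL1(2)] S finS by (simp add: card_Diff_singleton)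
  define xs where "xs = L1 @ a # b # L2"
  define ys where "ys = L1 @ b # a # L2"
  have dx: "distinct xs" "set xs = {1..n}" using sL1 sL2 S unfolding xs_def by auto
  have dy: "distinct ys" "set ys = {1..n}" using sL1 sL2 S unfolding ys_def by auto
  obtain p where p: "p \<in> Sn n" "\<forall>j\<le>n. p ` {1..j} = set (take j xs)" using list_perm[OF dx] by blast
  obtain q where q: "q \<in> Sn n" "\<forall>j\<le>n. q ` {1..j} = set (take j ys)" using list_perm[OF dy] by blast
  have eqj: "d (p ` {1..j}) = d (q ` {1..j})" if j: "j \<in> {1..n-1} - {k}" for j
  proof -
    have jn: "j \<le> n" using j by auto
    have "set (take j xs) = set (take j ys)"
    proof (cases "j < k")
      case True
      then have "j \<le> length L1" using lL1 by auto
      then show ?thesis by (simp add: xs_def ys_def)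
    next
      case False
      then have "j > k" using j by auto
      then have m: "j = length L1 + Suc (Suc (j - k - 1))" using lL1 S(3) by auto
      show ?thesis by (subst (1 2) m) (auto simp: xs_def ys_def)
    qed
    then show ?thesis using p(2) q(2) jn by simp
  qed
  have kn: "k \<le> n" using S(3) by auto
  have px: "p ` {1..k} = S"
  proof -
    have "take k xs = L1 @ [a]" using lL1 S(3) by (subgoal_tac "k = length L1 + 1") (auto simp: xs_def)
    then show ?thesis using p(2) kn sL1 S(4) by auto
  qed
  have qx: "q ` {1..k} = insert b (S - {a})"
  proof -
    have "take k ys = L1 @ [b]" using lL1 S(3) by (subgoal_tac "k = length L1 + 1") (auto simp: ys_def)
    then show ?thesis using q(2) kn sL1 by auto
  qed
  have kin: "k \<in> {1..n-1}" using S(3) .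
  have "0 = d (p ` {1..k}) + (\<Sum>j\<in>{1..n-1} - {k}. d (p ` {1..j}))"
    using Z p(1) sum.remove[OF finite_atLeastAtMost kin, of "\<lambda>j. d (p ` {1..j})"] by simp
  moreover have "0 = d (q ` {1..k}) + (\<Sum>j\<in>{1..n-1} - {k}. d (q ` {1..j}))"
    using Z q(1) sum.remove[OF finite_atLeastAtMost kin, of "\<lambda>j. d (q ` {1..j})"] by simp
  moreover have "(\<Sum>j\<in>{1..n-1} - {k}. d (p ` {1..j})) = (\<Sum>j\<in>{1..n-1} - {k}. d (q ` {1..j}))"
    using eqj by (rule sum.cong[OF refl])
  ultimately show ?thesis using px qx by simp
qed

lemma const_aux:
  assumes Z: "\<forall>p\<in>Sn n. (\<Sum>k=1..n-1. d (p ` {1..k})) = (0::real)"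
    and T: "T \<in> II n"
  shows "\<forall>S. S \<in> II n \<and> card S = card T \<and> card (S - T) = m \<longrightarrow> d S = d T"
proof (induction m)
  case 0
  have fT: "finite T" using II_card[OF T] by simp
  show ?case
  proof (intro allI impI)
    fix S assume S: "S \<in> II n \<and> card S = card T \<and> card (S - T) = 0"
    have fS: "finite S" using II_card S by blast
    then have "S \<subseteq> T" using S by auto
    then have "S = T" using card_subset_eq[OF fT] S by blast
    then show "d S = d T" by simp
  qed
next
  case (Suc m)
  have fT: "finite T" using II_card[OF T] by simp
  show ?case
  proof (intro allI impI)
    fix S assume S: "S \<in> II n \<and> card S = card T \<and> card (S - T) = Suc m"
    have fS: "finite S" using II_card S by blast
    have "S - T \<noteq> {}" using S by (metis card.empty Zero_not_Suc)
    then obtain a where a: "a \<in> S" "a \<notin> T" by auto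
    have "\<not> T \<subseteq> S"
    proof
      assume "T \<subseteq> S"
      then have "T = S" using card_subset_eq[OF fS] S by metis
      then show False using a by simp
    qed
    then obtain b where b: "b \<in> T" "b \<notin> S" by auto
    define S' where "S' = insert b (S - {a})"
    have Ssub: "S \<subseteq> {1..n}" and Tsub: "T \<subseteq> {1..n}" using S T by (auto simp: II_def)
    have kS: "card S \<in> {1..n-1}" using II_card S by blast
    have e: "d S = d S'" unfolding S'_def
      by (rule exchange[OF Z Ssub refl kS a(1)]) (use b Tsub in auto)
    have cS': "card S' = card S" unfolding S'_def using fS a b
      by (simp add: card_Diff_singleton) (metis One_nat_def Suc_pred card_gt_0_iff empty_iff)
    have "S' \<noteq> {1..n}" using cS' kS by auto
    then have S'I: "S' \<in> II n" using Ssub Tsub b unfolding S'_def II_def by auto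
    have "S' - T = (S - T) - {a}" unfolding S'_def using b by auto
    then have "card (S' - T) = m" using S a fS by (simp add: card_Diff_singleton)
    then have "d S' = d T" using Suc.IH S'I cS' S by auto
    then show "d S = d T" using e by simp
  qed
qed

lemma indep_family:
  assumes n: "n \<ge> 2"
    and Z: "\<forall>p\<in>Sn n. (\<Sum>S\<in>JJ n. c S * FF n S p) = (0::real)"
  shows "\<forall>S\<in>JJ n. c S = 0"
proof -
  define d where "d S = (if S \<in> JJ n then c S else 0)" for S
  have fin: "finite (II n)" unfolding II_def by (rule finite_subset[of _ "Pow {1..n}"]) auto
  have JI: "JJ n \<subseteq> II n" unfolding JJ_def by auto
  have Z': "\<forall>p\<in>Sn n. (\<Sum>k=1..n-1. d (p ` {1..k})) = 0"
  proof
    fix p assume p: "p \<in> Sn n"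
    have "(\<Sum>S\<in>II n. d S * FF n S p) = (\<Sum>S\<in>JJ n. c S * FF n S p)"
      by (rule sum.mono_neutral_cong_right[OF fin JI]) (auto simp: d_def)
    then show "(\<Sum>k=1..n-1. d (p ` {1..k})) = 0" using key_sum[OF p, of d] Z p by simp
  qed
  have seg: "{1..k} \<in> II n" if "k \<in> {1..n-1}" for k
    using that by (auto simp: II_def)
  have big: "d S = 0" if S: "S \<in> II n" "card S \<ge> 2" for S
  proof -
    have k: "card S \<in> {1..n-1}" using II_card[OF S(1)] by simp
    have "d S = d {1..card S}"
      using const_aux[OF Z' seg[OF k], of "card (S - {1..card S})"] S by auto
    also have "\<dots> = 0" using S k unfolding d_def JJ_def by auto
    finally show ?thesis .
  qed
  have id: "id \<in> Sn n" unfolding Sn_def by (simp add: permutes_id)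
  have "0 = (\<Sum>k=1..n-1. d (id ` {1..k}))" using Z' id by metis
  also have "\<dots> = (\<Sum>k=1..n-1. d {1..k})" by simp
  also have "\<dots> = d {1} + (\<Sum>k=2..n-1. d {1..k})"
  proof -
    have "{1..n-1} = insert 1 {2..n-1}" using n by auto
    then show ?thesis by simp
  qed
  also have "(\<Sum>k=2..n-1. d {1..k}) = 0"
    using big seg by (intro sum.neutral) auto
  finally have d1: "d {1} = 0" by simp
  have small: "d S = 0" if S: "S \<in> II n" "card S = 1" for S
  proof -
    have "{1} \<in> II n" using seg[of 1] n by auto
    then have "d S = d {1}"
      using const_aux[OF Z' \<open>{1} \<in> II n\<close>, of "card (S - {1})"] S by auto
    then show ?thesis using d1 by simp
  qed
  show ?thesis
  proof
    fix S assume S: "S \<in> JJ n"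
    then have SI: "S \<in> II n" using JI by auto
    have "card S \<ge> 1" using II_card[OF SI] by simp
    then have "d S = 0" using big small SI by (cases "card S = 1") auto
    then show "c S = 0" using S by (simp add: d_def)
  qed
qed

lemma marg_card: "inj p \<Longrightarrow> marginal p A {j} = (if j \<in> p ` A then 1 else 0)"
proof -
  assume inj: "inj p"
  show ?thesis
  proof (cases "j \<in> p ` A")
    case True
    then obtain s0 where s0: "s0 \<in> A" "j = p s0" by auto
    have "{s. s \<in> A \<and> p s \<in> {j}} = {s0}" using s0 inj by (auto dest: injD)
    then show ?thesis using True unfolding marginal_def by simp
  next
    case False
    then have e: "{s. s \<in> A \<and> p s \<in> {j}} = {}" by auto
    show ?thesis using False unfolding marginal_def e by simp
  qed
qed

lemma marg_in: "inj p \<Longrightarrow> j \<in> p ` A \<Longrightarrow> marginal p A {j} = 1"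
  using marg_card[of p A j] by (simp only: if_True)

lemma marg_pos: "marginal p A {j} \<noteq> 0 \<Longrightarrow> j \<in> p ` A"
proof (rule ccontr)
  assume a: "marginal p A {j} \<noteq> 0" "j \<notin> p ` A"
  then have e: "{s. s \<in> A \<and> p s \<in> {j}} = {}" by auto
  then show False using a(1) unfolding marginal_def e by simp
qed

lemma FF_in_UB:
  assumes S: "S \<in> II n"
  shows "FF n S \<in> UB n (thin_section n (card S)) (full_partition n)"
proof -
  let ?k = "card S"
  have k: "?k \<le> n" using II_card[OF S] by auto
  have pre: "p ` {1..?k} = q ` {1..?k}"
    if p: "p \<in> Sn n" and q: "q \<in> Sn n"
      and m: "\<forall>A\<in>thin_section n ?k. \<forall>B\<in>full_partition n. marginal p A B = marginal q A B" for p q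
  proof -
    have A: "{1..?k} \<in> thin_section n ?k" by (simp add: thin_section_def)
    have sub: "p ` {1..?k} \<subseteq> q ` {1..?k}" if p: "p \<in> Sn n" and q: "q \<in> Sn n"
      and m: "\<forall>A\<in>thin_section n ?k. \<forall>B\<in>full_partition n. marginal p A B = marginal q A B" for p q
    proof
      fix j assume j: "j \<in> p ` {1..?k}"
      then have "j \<in> {1..n}" using Sn_img[OF p k] by auto
      then have B: "{j} \<in> full_partition n" by (auto simp: full_partition_def)
      have "marginal p {1..?k} {j} = 1" by (rule marg_in[OF Sn_inj[OF p] j])
      moreover have "marginal p {1..?k} {j} = marginal q {1..?k} {j}" using m A B by blast
      ultimately have "marginal q {1..?k} {j} = 1" by simp
      then show "j \<in> q ` {1..?k}" by (intro marg_pos) simp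
    qed
    have m': "\<forall>A\<in>thin_section n ?k. \<forall>B\<in>full_partition n. marginal q A B = marginal p A B"
      using m by simp
    show ?thesis using sub[OF p q m] sub[OF q p m'] by (rule subset_antisym)
  qed
  show ?thesis unfolding UB_def
  proof (intro CollectI conjI ballI impI allI)
    fix p q assume p: "p \<in> Sn n" and q: "q \<in> Sn n"
      and m: "\<forall>A\<in>thin_section n ?k. \<forall>B\<in>full_partition n. marginal p A B = marginal q A B"
    show "FF n S p = FF n S q" using pre[OF p q m] p q by (simp add: FF_def)
  next
    fix p assume "p \<notin> Sn n" then show "FF n S p = 0" by (simp add: FF_def)
  qed
qed

lemma marg_eq:
  assumes p: "p \<in> Sn n" and q: "q \<in> Sn n" and k: "k \<le> n" and e: "p ` {1..k} = q ` {1..k}"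
  shows "\<forall>A\<in>thin_section n k. \<forall>B\<in>full_partition n. marginal p A B = marginal q A B"
proof -
  have rest: "r ` {k+1..n} = {1..n} - r ` {1..k}" if r: "r \<in> Sn n" for r
  proof -
    have "{k+1..n} = {1..n} - {1..k}" by auto
    then have "r ` {k+1..n} = r ` {1..n} - r ` {1..k}" using Sn_inj[OF r] by (simp add: image_set_diff)
    moreover have "r ` {1..n} = {1..n}" using r unfolding Sn_def by (simp add: permutes_image)
    ultimately show ?thesis by simp
  qed
  show ?thesis
  proof (intro ballI)
    fix A B assume A: "A \<in> thin_section n k" and B: "B \<in> full_partition n"
    then obtain j where Bj: "B = {j}" by (auto simp: full_partition_def)
    have pq: "p ` A = q ` A" using A e rest[OF p] rest[OF q] by (auto simp: thin_section_def)
    show "marginal p A B = marginal q A B"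
      unfolding Bj by (simp only: marg_card[OF Sn_inj[OF p]] marg_card[OF Sn_inj[OF q]] pq)
  qed
qed

lemma finII: "finite (II n)" unfolding II_def by (rule finite_subset[of _ "Pow {1..n}"]) auto

lemma UB_decomp:
  assumes k: "k \<in> {1..n-1}" and v: "v \<in> UB n (thin_section n k) (full_partition n)"
  shows "v = (\<Sum>T\<in>{T\<in>II n. card T = k}. rscale (v (SOME p. p \<in> Sn n \<and> p ` {1..k} = T)) (FF n T))"
    (is "v = ?r")
proof
  fix p
  have kn: "k \<le> n" using k by auto
  have fin: "finite {T\<in>II n. card T = k}" using finII by simp
  show "v p = ?r p"
  proof (cases "p \<in> Sn n")
    case False
    then show ?thesis using v by (simp add: UB_def sum_apply_fun FF_def)
  next
    case True
    let ?T = "p ` {1..k}"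
    have Tin: "?T \<in> {T\<in>II n. card T = k}" using prefix_II[OF True k] Sn_card[OF True] by simp
    have "?r p = (\<Sum>T\<in>{T\<in>II n. card T = k}. (if T = ?T then v (SOME q. q \<in> Sn n \<and> q ` {1..k} = T) else 0))"
      unfolding sum_apply_fun by (intro sum.cong refl) (simp add: FF_eq[OF True])
    also have "\<dots> = v (SOME q. q \<in> Sn n \<and> q ` {1..k} = ?T)"
      using Tin fin by (simp add: sum.delta sum.delta')
    also have "\<dots> = v p"
    proof -
      have "\<exists>q. q \<in> Sn n \<and> q ` {1..k} = ?T" using True by blast
      then have sq: "(SOME q. q \<in> Sn n \<and> q ` {1..k} = ?T) \<in> Sn n \<and> (SOME q. q \<in> Sn n \<and> q ` {1..k} = ?T) ` {1..k} = ?T"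
        by (rule someI_ex)
      have vUB: "\<forall>p\<in>Sn n. \<forall>q\<in>Sn n.
                    (\<forall>A\<in>thin_section n k. \<forall>B\<in>full_partition n. marginal p A B = marginal q A B) \<longrightarrow> v p = v q"
        using v unfolding UB_def mem_Collect_eq by (rule conjunct1)
      have m: "\<forall>A\<in>thin_section n k. \<forall>B\<in>full_partition n. marginal (SOME q. q \<in> Sn n \<and> q ` {1..k} = ?T) A B = marginal p A B"
        by (rule marg_eq[OF conjunct1[OF sq] True kn conjunct2[OF sq]])
      have "(SOME q. q \<in> Sn n \<and> q ` {1..k} = ?T) \<in> Sn n" using sq by (rule conjunct1)
      then show ?thesis using vUB True m by blast
    qed
    finally show ?thesis by simp
  qed
qed

lemma FF_level_sum:
  assumes k: "k \<in> {1..n-1}"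
  shows "(\<Sum>T\<in>{T\<in>II n. card T = k}. FF n T) = (\<lambda>p. if p \<in> Sn n then 1 else 0)"
proof
  fix p
  have fin: "finite {T\<in>II n. card T = k}" using finII by simp
  show "(\<Sum>T\<in>{T\<in>II n. card T = k}. FF n T) p = (if p \<in> Sn n then 1 else 0)"
  proof (cases "p \<in> Sn n")
    case False then show ?thesis by (simp add: sum_apply_fun FF_def)
  next
    case True
    have Tin: "p ` {1..k} \<in> {T\<in>II n. card T = k}" using prefix_II[OF True k] Sn_card[OF True] by simp
    have "(\<Sum>T\<in>{T\<in>II n. card T = k}. FF n T) p = (\<Sum>T\<in>{T\<in>II n. card T = k}. if T = p ` {1..k} then 1 else 0)"
      unfolding sum_apply_fun by (intro sum.cong refl) (simp add: FF_eq[OF True])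
    also have "\<dots> = 1" using Tin fin by (simp add: sum.delta sum.delta')
    finally show ?thesis using True by simp
  qed
qed

lemma FF_in_span:
  assumes n: "n \<ge> 2" and S: "S \<in> II n"
  shows "FF n S \<in> V.span (FF n ` JJ n)"
proof (cases "S \<in> JJ n")
  case True then show ?thesis by (intro V.span_base) auto
next
  case False
  then obtain k where k: "k \<in> {2..n-1}" "S = {1..k}" using S unfolding JJ_def by auto
  have cS: "card S = k" using k by simp
  let ?L = "\<lambda>k. {T\<in>II n. card T = k}"
  have fin: "finite (?L k)" using finII by simp
  have Sin: "S \<in> ?L k" using S cS by simp
  have k1: "k \<in> {1..n-1}" "1 \<in> {1..n-1}" using k n by auto
  have eq: "FF n S = (\<Sum>T\<in>?L 1. FF n T) - (\<Sum>T\<in>?L k - {S}. FF n T)"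
    using FF_level_sum[OF k1(1)] FF_level_sum[OF k1(2)] sum.remove[OF fin Sin, of "FF n"] by (simp add: eq_diff_eq)
  have L1: "?L 1 \<subseteq> JJ n" unfolding JJ_def by auto
  have Lk: "?L k - {S} \<subseteq> JJ n"
  proof
    fix T assume T: "T \<in> ?L k - {S}"
    have "T \<noteq> {1..j}" if "j \<in> {2..n-1}" for j
    proof
      assume "T = {1..j}"
      then have "j = k" using T by simp
      then show False using T k \<open>T = {1..j}\<close> by simp
    qed
    then show "T \<in> JJ n" using T unfolding JJ_def by auto
  qed
  show ?thesis unfolding eq
    by (intro V.span_diff V.span_sum V.span_base) (use L1 Lk in auto)
qed

lemma FF_inj:
  assumes n: "n \<ge> 2"
  shows "inj_on (FF n) (JJ n)"
proof (rule inj_onI, rule ccontr)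
  fix S T assume S: "S \<in> JJ n" and T: "T \<in> JJ n" and e: "FF n S = FF n T" and ne: "S \<noteq> T"
  define c where "c U = (if U = S then 1 else if U = T then -1 else (0::real))" for U
  have finJ: "finite (JJ n)" using finII unfolding JJ_def by auto
  have "\<forall>p\<in>Sn n. (\<Sum>U\<in>JJ n. c U * FF n U p) = 0"
  proof
    fix p
    have "(\<Sum>U\<in>JJ n. c U * FF n U p) = (\<Sum>U\<in>JJ n. (if U = S then FF n S p else 0) + (if U = T then - FF n T p else 0))"
      by (intro sum.cong refl) (auto simp: c_def ne)
    also have "\<dots> = FF n S p - FF n T p" using S T finJ by (simp add: sum.distrib sum.delta)
    finally show "(\<Sum>U\<in>JJ n. c U * FF n U p) = 0" using e by simp
  qed
  then have "c S = 0" using indep_family[OF n] S by blast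
  then show False by (simp add: c_def)
qed

lemma FF_indep:
  assumes n: "n \<ge> 2"
  shows "V.independent (FF n ` JJ n)"
proof (rule V.independent_if_scalars_zero)
  have finJ: "finite (JJ n)" using finII unfolding JJ_def by auto
  then show "finite (FF n ` JJ n)" by simp
  fix f x assume sum0: "(\<Sum>x\<in>FF n ` JJ n. rscale (f x) x) = 0" and x: "x \<in> FF n ` JJ n"
  have "(\<Sum>S\<in>JJ n. rscale (f (FF n S)) (FF n S)) = 0"
    using sum0 sum.reindex[OF FF_inj[OF n], of "\<lambda>x. rscale (f x) x"] by (simp add: comp_def)
  then have "\<forall>p\<in>Sn n. (\<Sum>S\<in>JJ n. f (FF n S) * FF n S p) = 0"
  proof (intro ballI)
    fix p assume h: "(\<Sum>S\<in>JJ n. rscale (f (FF n S)) (FF n S)) = 0"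
    have "(\<Sum>S\<in>JJ n. rscale (f (FF n S)) (FF n S)) p = 0" by (simp add: h)
    then show "(\<Sum>S\<in>JJ n. f (FF n S) * FF n S p) = 0" by (simp only: sum_apply_fun)
  qed
  then have "\<forall>S\<in>JJ n. f (FF n S) = 0" by (rule indep_family[OF n])
  then show "f x = 0" using x by auto
qed

lemma card_JJ:
  assumes n: "n \<ge> 2"
  shows "card (JJ n) = 2^n - n"
proof -
  let ?R = "(\<lambda>k. {1..k}) ` {2..n-1}"
  have RJ: "JJ n = II n - ?R" unfolding JJ_def by auto
  have RI: "?R \<subseteq> II n" unfolding II_def by auto
  have injR: "inj_on (\<lambda>k::nat. {1..k}) {2..n-1}" by (rule inj_onI) (metis card_atLeastAtMost diff_Suc_1)
  have cR: "card ?R = n - 2" using card_image[OF injR] by simp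
  have II: "II n = Pow {1..n} - {{}, {1..n}}" unfolding II_def by auto
  have cII: "card (II n) = 2^n - 2"
    unfolding II using n by (subst card_Diff_subset) (auto simp: card_Pow)
  have "card (JJ n) = card (II n) - card ?R"
    unfolding RJ by (rule card_Diff_subset[OF finite_subset[OF RI finII] RI])
  also have "\<dots> = 2^n - n" using cII cR n less_exp[of n] by simp
  finally show ?thesis .
qed

lemma choose_sum:
  "(\<Sum>i=1..n. (n choose i) - 1) = 2^n - n - 1"
proof -
  have "(\<Sum>i=1..n. (n choose i) - 1) = (\<Sum>i=1..n. n choose i) - (\<Sum>i=1..n. 1)"
    by (rule sum_subtractf_nat) (simp add: Suc_leI)
  moreover have "{..n} = insert 0 {1..n}" by auto
  then have "(\<Sum>i=1..n. n choose i) = 2^n - 1" using choose_row_sum[of n] by simp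
  ultimately show ?thesis by simp
qed

theorem mainTheorem11:
  fixes n :: nat
  assumes "n \<ge> 2"
  shows "num_free_params n {(thin_section n k, full_partition n) | k. k \<in> {1..n-1}}
           = (\<Sum>i=1..n. (n choose i) - 1)
       \<and> (\<Sum>i=1..n. (n choose i) - 1) = 2^n - n - 1"
proof -
  let ?Bs = "{(thin_section n k, full_partition n) | k. k \<in> {1..n-1}}"
  let ?X = "\<Union>(R,C)\<in>?Bs. UB n R C"
  have X1: "?X \<subseteq> V.span (FF n ` JJ n)"
  proof
    fix v assume "v \<in> ?X"
    then obtain k where k: "k \<in> {1..n-1}" and v: "v \<in> UB n (thin_section n k) (full_partition n)" by auto
    show "v \<in> V.span (FF n ` JJ n)"
      apply (subst UB_decomp[OF k v])
      apply (intro V.span_sum V.span_scale FF_in_span[OF assms])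
      by simp
  qed
  have X2: "FF n ` JJ n \<subseteq> V.span ?X"
  proof
    fix x assume "x \<in> FF n ` JJ n"
    then obtain S where S: "S \<in> JJ n" "x = FF n S" by auto
    have SI: "S \<in> II n" using S unfolding JJ_def by auto
    have "x \<in> ?X" using FF_in_UB[OF SI] II_card[OF SI] S by blast
    then show "x \<in> V.span ?X" by (rule V.span_base)
  qed
  have sp: "V.span ?X = V.span (FF n ` JJ n)"
  proof
    show "V.span ?X \<subseteq> V.span (FF n ` JJ n)" using V.span_mono[OF X1] V.span_span by blast
    show "V.span (FF n ` JJ n) \<subseteq> V.span ?X" using V.span_mono[OF X2] V.span_span by blast
  qed
  have "num_free_params n ?Bs = V.dim (V.span (FF n ` JJ n)) - 1"
    unfolding num_free_params_def log_linear_space_def sp by simp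
  also have "\<dots> = card (FF n ` JJ n) - 1" using V.dim_span_eq_card_independent[OF FF_indep[OF assms]] by simp
  also have "\<dots> = 2^n - n - 1" using card_image[OF FF_inj[OF assms]] card_JJ[OF assms] by simp
  finally show ?thesis using choose_sum by simp
qed

end
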